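(* Let $a,w\in \mathcal{A}$. Then the following are equivalent: (1) $a$ has a $w$-weighted generalized core-EP inverse. (2) There exist $z,y\in \mathcal{A}$ such that $a=z+y$, $(wz)^*(wy)=ywz=0$, $z$ has a $w$-weighted core inverse, and $y\in \mathcal{A}_w^{qnil}$. (3) There exist $z,y\in \mathcal{A}$ such that $a=z+y$, $ywz=0$, $z$ has a $w$-weighted core inverse, and $y\in \mathcal{A}_w^{qnil}$. In this case, $a^{\mathrm{gcEP},w}=z^{\mathrm{core},w}$.
   Context: $\mathcal{A}$ is a complex Banach *-algebra with identity. An element $a$ has a $w$-weighted core inverse if there is $x\in\mathcal{A}$ with $a(wx)^2=x$, $(wawx)^*=wawx$, $xw(aw)^2=aw$; such $x$ is unique and denoted $a^{\mathrm{core},w}$. An element $a$ has a $w$-weighted generalized core-EP inverse if there is $x\in\mathcal{A}$ with $a(wx)^2=x$, $(wawx)^*=wawx$, $\lim_{n\to\infty}\|(aw)^n-(xw)(aw)^{n+1}\|^{1/n}=0$; such $x$ is unique and denoted $a^{\mathrm{gcEP},w}$. $\mathcal{A}_w^{qnil}=\{y\in\mathcal{A}: \lim_{n\to\infty}\|(yw)^n\|^{1/n}=0\}$. *)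

theory Defs
  imports "HOL-Analysis.Analysis"
begin

class cbanach_star_algebra_1 = banach + real_normed_algebra_1 +
  fixes scaleC :: "complex \<Rightarrow> 'a \<Rightarrow> 'a"
    and invol :: "'a \<Rightarrow> 'a"
  assumes scaleC_of_real: "scaleC (complex_of_real r) x = scaleR r x"
    and scaleC_add_left: "scaleC (c + d) x = scaleC c x + scaleC d x"
    and scaleC_add_right: "scaleC c (x + y) = scaleC c x + scaleC c y"
    and scaleC_scaleC: "scaleC c (scaleC d x) = scaleC (c * d) x"
    and scaleC_one: "scaleC 1 x = x"
    and norm_scaleC: "norm (scaleC c x) = cmod c * norm x"
    and scaleC_mult_left: "scaleC c x * y = scaleC c (x * y)"
    and scaleC_mult_right: "x * scaleC c y = scaleC c (x * y)"
    and invol_invol: "invol (invol x) = x"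
    and invol_add: "invol (x + y) = invol x + invol y"
    and invol_mult: "invol (x * y) = invol y * invol x"
    and invol_scaleC: "invol (scaleC c x) = scaleC (cnj c) (invol x)"

definition is_wcore_inv :: "'a::cbanach_star_algebra_1 \<Rightarrow> 'a \<Rightarrow> 'a \<Rightarrow> bool" where
  "is_wcore_inv a w x \<longleftrightarrow>
     a * (w * x)^2 = x \<and> invol (w * a * w * x) = w * a * w * x \<and> x * w * (a * w)^2 = a * w"

definition has_wcore_inv :: "'a::cbanach_star_algebra_1 \<Rightarrow> 'a \<Rightarrow> bool" where
  "has_wcore_inv a w \<longleftrightarrow> (\<exists>x. is_wcore_inv a w x)"

definition wcore_inv :: "'a::cbanach_star_algebra_1 \<Rightarrow> 'a \<Rightarrow> 'a" where
  "wcore_inv a w = (THE x. is_wcore_inv a w x)"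

definition is_wgcEP_inv :: "'a::cbanach_star_algebra_1 \<Rightarrow> 'a \<Rightarrow> 'a \<Rightarrow> bool" where
  "is_wgcEP_inv a w x \<longleftrightarrow>
     a * (w * x)^2 = x \<and> invol (w * a * w * x) = w * a * w * x \<and>
     (\<lambda>n. norm ((a * w)^n - (x * w) * (a * w)^(n + 1)) powr (1 / real n)) \<longlonglongrightarrow> 0"

definition has_wgcEP_inv :: "'a::cbanach_star_algebra_1 \<Rightarrow> 'a \<Rightarrow> bool" where
  "has_wgcEP_inv a w \<longleftrightarrow> (\<exists>x. is_wgcEP_inv a w x)"

definition wgcEP_inv :: "'a::cbanach_star_algebra_1 \<Rightarrow> 'a \<Rightarrow> 'a" where
  "wgcEP_inv a w = (THE x. is_wgcEP_inv a w x)"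

definition w_qnil :: "'a::cbanach_star_algebra_1 \<Rightarrow> 'a set" where
  "w_qnil w = {y. (\<lambda>n. norm ((y * w)^n) powr (1 / real n)) \<longlonglongrightarrow> 0}"

end

theory Submission
  imports Defs
begin

lemma le_pow_of_root:
  fixes d e :: real and n :: nat
  assumes "0 \<le> d" "n > 0" "d powr (1 / real n) < e"
  shows "d \<le> e ^ n"
proof (cases "d = 0")
  case True
  then show ?thesis using assms by simp
next
  case False
  then have dp: "d > 0" using assms by simp
  have "(d powr (1 / real n)) ^ n = (d powr (1 / real n)) powr (real n)"
    using dp by (simp add: powr_realpow)
  also have "\<dots> = d" using assms(2) dp by (simp add: powr_powr)
  finally have eq: "(d powr (1 / real n)) ^ n = d" .
  have "(d powr (1 / real n)) ^ n \<le> e ^ n"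
    by (rule power_mono) (use assms in auto)
  then show ?thesis using eq by simp
qed

lemma zero_lemma:
  fixes c M K :: real and d :: "nat \<Rightarrow> real"
  assumes lim: "(\<lambda>n. d n powr (1 / real n)) \<longlonglongrightarrow> 0"
    and bnd: "\<And>n. n \<ge> 1 \<Longrightarrow> c \<le> M * d n * K ^ n"
    and M: "M \<ge> 0" and K: "K \<ge> 0" and d: "\<And>n. d n \<ge> 0"
  shows "c \<le> 0"
proof -
  define e where "e = 1 / (2 * (K + 1))"
  have e: "e > 0" using K by (simp add: e_def)
  have eK: "e * K \<le> 1/2" using K by (simp add: e_def field_simps)
  have ev: "eventually (\<lambda>n. d n powr (1 / real n) < e) sequentially"
    using order_tendstoD(2)[OF lim e] .
  have ev2: "eventually (\<lambda>n. c \<le> M * (1/2) ^ n) sequentially"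
    using ev eventually_ge_at_top[of 1]
  proof eventually_elim
    case (elim n)
    have "d n \<le> e ^ n" using le_pow_of_root[OF d] elim by auto
    then have "M * d n * K ^ n \<le> M * e ^ n * K ^ n"
      using M K by (intro mult_right_mono mult_left_mono) auto
    also have "\<dots> = M * (e * K) ^ n" by (simp add: power_mult_distrib)
    also have "\<dots> \<le> M * (1/2) ^ n"
      using M e K eK by (intro mult_left_mono power_mono) auto
    finally show ?case using bnd[of n] elim by linarith
  qed
  have "(\<lambda>n. M * (1/2::real) ^ n) \<longlonglongrightarrow> M * 0"
    by (intro tendsto_mult tendsto_const LIMSEQ_power_zero) auto
  then have "(\<lambda>n. M * (1/2::real) ^ n) \<longlonglongrightarrow> 0" by simp
  show "c \<le> 0"
    using tendsto_le[OF _ \<open>(\<lambda>n. M * (1/2::real) ^ n) \<longlonglongrightarrow> 0\<close> tendsto_const ev2] by simp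
qed

lemma qn_lemma:
  fixes f d :: "nat \<Rightarrow> real" and K :: real
  assumes lim: "(\<lambda>n. d n powr (1 / real n)) \<longlonglongrightarrow> 0"
    and bnd: "\<And>n. n \<ge> 1 \<Longrightarrow> f n \<le> K * d n"
    and f: "\<And>n. f n \<ge> 0" and K: "K \<ge> 0" and d: "\<And>n. d n \<ge> 0"
  shows "(\<lambda>n. f n powr (1 / real n)) \<longlonglongrightarrow> 0"
proof (rule Lim_null_comparison)
  show "(\<lambda>n. max 1 K * d n powr (1 / real n)) \<longlonglongrightarrow> 0"
    using tendsto_mult_right_zero[OF lim, of "max 1 K"] by simp
  show "eventually (\<lambda>n. norm (f n powr (1 / real n)) \<le> max 1 K * d n powr (1 / real n)) sequentially"
    using eventually_ge_at_top[of 1]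
  proof eventually_elim
    case (elim n)
    have ex: "0 \<le> 1 / real n" "1 / real n \<le> 1" using elim by auto
    have Kp: "K powr (1 / real n) \<le> max 1 K"
    proof (cases "K \<ge> 1")
      case True
      then have "K powr (1 / real n) \<le> K powr 1" by (intro powr_mono ex) auto
      then show ?thesis using True by simp
    next
      case False
      then have "K powr (1 / real n) \<le> 1" using K ex by (intro powr_le1) auto
      then show ?thesis by simp
    qed
    have "f n powr (1 / real n) \<le> (K * d n) powr (1 / real n)"
      using bnd[OF elim] f ex by (intro powr_mono2) auto
    also have "\<dots> = K powr (1 / real n) * d n powr (1 / real n)"
      using K d by (simp add: powr_mult)
    also have "\<dots> \<le> max 1 K * d n powr (1 / real n)"
      using Kp by (intro mult_right_mono) auto
    finally show ?case by simp
  qed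
qed

lemma pw1:
  fixes B X :: "'a::ring_1"
  assumes "B * X * X = X"
  shows "B ^ n * X ^ Suc n = X"
proof (induction n)
  case 0 then show ?case by simp
next
  case (Suc n)
  have "B ^ Suc n * X ^ Suc (Suc n) = B ^ n * (B * X * X) * X ^ n"
  proof -
    have "B ^ Suc n = B ^ n * B" by (rule power_Suc2)
    moreover have "X ^ Suc (Suc n) = X * (X * X ^ n)" by simp
    ultimately show ?thesis by (simp add: mult.assoc)
  qed
  also have "\<dots> = B ^ n * X ^ Suc n" using assms by (simp add: mult.assoc)
  finally show ?case using Suc by simp
qed

lemma pw2:
  fixes B X :: "'a::ring_1"
  assumes "B * X * X = X" "n \<ge> 1"
  shows "B ^ n * X ^ n = B * X"
proof -
  obtain m where m: "n = Suc m" using assms(2) by (cases n) auto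
  have "B ^ n * X ^ n = B * (B ^ m * X ^ Suc m)" by (simp add: m mult.assoc)
  then show ?thesis using pw1[OF assms(1)] by simp
qed

lemma master_alg:
  fixes B X1 X2 :: "'a::ring_1"
  assumes "B * X2 * X2 = X2" "n \<ge> 1"
  shows "(B ^ n - X1 * B ^ (n + 1)) * X2 ^ n = B * X2 - X1 * B * B * X2"
proof -
  have "(B ^ n - X1 * B ^ (n + 1)) * X2 ^ n = B ^ n * X2 ^ n - X1 * B * (B ^ n * X2 ^ n)"
    by (simp add: algebra_simps)
  then show ?thesis using pw2[OF assms] by (simp add: mult.assoc)
qed

lemma E1_alg:
  fixes a w x :: "'a::cbanach_star_algebra_1"
  assumes "a * (w * x)^2 = x"
  shows "(a * w) * (x * w) * (x * w) = x * w" "(a * w) * (x * w) * x = x"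
proof -
  have e: "a * w * x * w * x = x" using assms by (simp add: power2_eq_square mult.assoc)
  show "(a * w) * (x * w) * x = x" using e by (simp add: mult.assoc)
  show "(a * w) * (x * w) * (x * w) = x * w" using arg_cong[OF e, of "\<lambda>t. t * w"] by (simp add: mult.assoc)
qed

lemma master:
  fixes a w x1 x2 :: "'a::cbanach_star_algebra_1"
  assumes h1: "is_wgcEP_inv a w x1" and h2: "is_wgcEP_inv a w x2"
  shows "(a * w) * (x2 * w) = (x1 * w) * (a * w) * (a * w) * (x2 * w)"
proof -
  define B where "B = a * w"
  define X1 where "X1 = x1 * w"
  define X2 where "X2 = x2 * w"
  have lim: "(\<lambda>n. norm (B ^ n - X1 * B ^ (n + 1)) powr (1 / real n)) \<longlonglongrightarrow> 0"
    using h1 unfolding is_wgcEP_inv_def B_def X1_def by simp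
  have e2: "B * X2 * X2 = X2" using E1_alg(1)[of a w x2] h2 unfolding is_wgcEP_inv_def B_def X2_def by simp
  have "norm (B * X2 - X1 * B * B * X2) \<le> 0"
  proof (rule zero_lemma[OF lim, of _ 1 "norm X2"])
    fix n :: nat assume n: "n \<ge> 1"
    have "norm (B * X2 - X1 * B * B * X2) = norm ((B ^ n - X1 * B ^ (n + 1)) * X2 ^ n)"
      using master_alg[OF e2 n] by simp
    also have "\<dots> \<le> norm (B ^ n - X1 * B ^ (n + 1)) * norm (X2 ^ n)" by (rule norm_mult_ineq)
    also have "\<dots> \<le> norm (B ^ n - X1 * B ^ (n + 1)) * norm X2 ^ n"
      by (intro mult_left_mono norm_power_ineq) auto
    finally show "norm (B * X2 - X1 * B * B * X2) \<le> 1 * norm (B ^ n - X1 * B ^ (n + 1)) * norm X2 ^ n" by simp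
  qed auto
  then show ?thesis unfolding B_def X1_def X2_def by simp
qed

lemma cross:
  fixes a w x1 x2 :: "'a::cbanach_star_algebra_1"
  assumes h1: "is_wgcEP_inv a w x1" and h2: "is_wgcEP_inv a w x2"
  shows "x1 * w * (a * w) * x2 = x2"
proof -
  have m: "(a * w) * (x2 * w) = (x1 * w) * (a * w) * (a * w) * (x2 * w)" by (rule master[OF h1 h2])
  have e2: "(a * w) * (x2 * w) * x2 = x2" using E1_alg(2)[of a w x2] h2 unfolding is_wgcEP_inv_def by simp
  have "x1 * w * (a * w) * x2 = x1 * w * (a * w) * ((a * w) * (x2 * w) * x2)" using e2 by simp
  also have "\<dots> = ((x1 * w) * (a * w) * (a * w) * (x2 * w)) * x2" by (simp add: mult.assoc)
  also have "\<dots> = x2" using m e2 by simp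
  finally show ?thesis .
qed

lemma gcEP_unique:
  fixes a w x1 x2 :: "'a::cbanach_star_algebra_1"
  assumes h1: "is_wgcEP_inv a w x1" and h2: "is_wgcEP_inv a w x2"
  shows "x1 = x2"
proof -
  have c12: "x1 * w * (a * w) * x2 = x2" by (rule cross[OF h1 h2])
  have c21: "x2 * w * (a * w) * x1 = x1" by (rule cross[OF h2 h1])
  have c11: "x1 * w * (a * w) * x1 = x1" by (rule cross[OF h1 h1])
  have s1: "invol (w * a * w * x1) = w * a * w * x1" using h1 unfolding is_wgcEP_inv_def by simp
  have s2: "invol (w * a * w * x2) = w * a * w * x2" using h2 unfolding is_wgcEP_inv_def by simp
  have p12: "(w * a * w * x1) * (w * a * w * x2) = w * a * w * x2"
  proof -
    have "(w * a * w * x1) * (w * a * w * x2) = w * a * w * (x1 * w * (a * w) * x2)" by (simp add: mult.assoc)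
    then show ?thesis using c12 by simp
  qed
  have p21: "(w * a * w * x2) * (w * a * w * x1) = w * a * w * x1"
  proof -
    have "(w * a * w * x2) * (w * a * w * x1) = w * a * w * (x2 * w * (a * w) * x1)" by (simp add: mult.assoc)
    then show ?thesis using c21 by simp
  qed
  have peq: "w * a * w * x2 = w * a * w * x1"
  proof -
    have "w * a * w * x2 = invol (w * a * w * x2)" using s2 by simp
    also have "\<dots> = invol ((w * a * w * x1) * (w * a * w * x2))" using p12 by simp
    also have "\<dots> = invol (w * a * w * x2) * invol (w * a * w * x1)" by (rule invol_mult)
    also have "\<dots> = (w * a * w * x2) * (w * a * w * x1)" using s1 s2 by simp
    also have "\<dots> = w * a * w * x1" by (rule p21)
    finally show ?thesis .
  qed
  have "x1 = x1 * (w * a * w * x1)" using c11 by (simp add: mult.assoc)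
  also have "\<dots> = x1 * (w * a * w * x2)" using peq by simp
  also have "\<dots> = x2" using c12 by (simp add: mult.assoc)
  finally show ?thesis .
qed

lemma three_to_one:
  fixes z y w x :: "'a::cbanach_star_algebra_1"
  assumes yz: "y * w * z = 0" and core: "is_wcore_inv z w x" and q: "y \<in> w_qnil w"
  shows "is_wgcEP_inv (z + y) w x"
proof -
  have c1: "z * (w * x)^2 = x" and c2: "invol (w * z * w * x) = w * z * w * x"
    and c3: "x * w * (z * w)^2 = z * w" using core unfolding is_wcore_inv_def by auto
  have ex: "z * w * x * w * x = x" using c1 by (simp add: power2_eq_square mult.assoc)
  have ywx: "y * w * x = 0"
  proof -
    have "y * w * x = (y * w * z) * w * x * w * x" using ex by (simp add: mult.assoc)
    then show ?thesis using yz by simp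
  qed
  have "y * (w * x)^2 = (y * w * x) * w * x" by (simp add: power2_eq_square mult.assoc)
  then have yy: "y * (w * x)^2 = 0" using ywx by simp
  have r1: "(z + y) * (w * x)^2 = x"
    using c1 yy by (simp add: distrib_right)
  have wywx: "w * y * w * x = 0" using ywx by (simp add: mult.assoc)
  have r2: "invol (w * (z + y) * w * x) = w * (z + y) * w * x"
    using c2 wywx by (simp add: distrib_left distrib_right)
  define Bz where "Bz = z * w"
  define N where "N = y * w"
  define X where "X = x * w"
  define R where "R = 1 - X * Bz - X * N"
  have NB: "N * Bz = 0" using yz by (simp add: N_def Bz_def mult.assoc[symmetric])
  have XBB: "X * Bz * Bz = Bz" using c3 by (simp add: X_def Bz_def power2_eq_square mult.assoc)
  have RB: "R * Bz = 0" using NB XBB by (simp add: R_def algebra_simps)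
  have RNB: "R * N ^ n * Bz = 0" for n
  proof (cases n)
    case 0 then show ?thesis using RB by simp
  next
    case (Suc m)
    have "R * N ^ n * Bz = R * N ^ m * (N * Bz)" by (simp add: Suc power_Suc2 mult.assoc del: power_Suc)
    then show ?thesis using NB by simp
  qed
  have D: "(Bz + N) ^ n - X * (Bz + N) ^ (n + 1) = R * N ^ n" for n
  proof (induction n)
    case 0 then show ?case by (simp add: R_def algebra_simps)
  next
    case (Suc n)
    have "(Bz + N) ^ Suc n - X * (Bz + N) ^ (Suc n + 1) = ((Bz + N) ^ n - X * (Bz + N) ^ (n + 1)) * (Bz + N)"
      by (simp add: power_Suc2 algebra_simps del: power_Suc)
    also have "\<dots> = R * N ^ n * (Bz + N)" by (simp only: Suc.IH)
    also have "\<dots> = R * N ^ n * Bz + R * N ^ n * N" by (simp add: distrib_left)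
    also have "\<dots> = R * N ^ Suc n" using RNB[of n] by (simp add: power_Suc2 mult.assoc del: power_Suc)
    finally show ?case .
  qed
  have aw: "(z + y) * w = Bz + N" by (simp add: Bz_def N_def distrib_right)
  have limN: "(\<lambda>n. norm (N ^ n) powr (1 / real n)) \<longlonglongrightarrow> 0" using q unfolding w_qnil_def N_def by simp
  have r3: "(\<lambda>n. norm (((z + y) * w) ^ n - (x * w) * ((z + y) * w) ^ (n + 1)) powr (1 / real n)) \<longlonglongrightarrow> 0"
    unfolding aw X_def[symmetric] D
  proof (rule qn_lemma[OF limN, of _ "norm R"])
    fix n :: nat
    show "norm (R * N ^ n) \<le> norm R * norm (N ^ n)" by (rule norm_mult_ineq)
  qed auto
  show ?thesis unfolding is_wgcEP_inv_def using r1 r2 r3 by blast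
qed

lemma one_to_two:
  fixes a w x :: "'a::cbanach_star_algebra_1"
  assumes h: "is_wgcEP_inv a w x"
  defines "z \<equiv> a * w * (x * w) * a"
  defines "y \<equiv> a - z"
  shows "a = z + y" "invol (w * z) * (w * y) = 0" "y * w * z = 0"
    "is_wcore_inv z w x" "y \<in> w_qnil w"
proof -
  define B where "B = a * w"
  define X where "X = x * w"
  have K: "B * X = X * B * B * X" using master[OF h h] by (simp add: B_def X_def)
  have e1: "B * X * x = x" using E1_alg(2)[of a w x] h by (simp add: is_wgcEP_inv_def B_def X_def)
  have e2: "B * X * X = X" using E1_alg(1)[of a w x] h by (simp add: is_wgcEP_inv_def B_def X_def)
  have XBx: "X * B * x = x" using cross[OF h h] by (simp add: B_def X_def)
  have XBX: "X * B * X = X"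
  proof -
    have "X * B * X = X * B * (B * X * X)" using e2 by simp
    also have "\<dots> = (X * B * B * X) * X" by (simp add: mult.assoc)
    also have "\<dots> = B * X * X" by (simp only: K[symmetric])
    also have "\<dots> = X" using e2 by simp
    finally show ?thesis .
  qed
  have zB: "z = B * X * a" by (simp add: z_def B_def X_def)
  have zw: "z * w = B * X * B" by (simp add: zB B_def mult.assoc)
  show "a = z + y" by (simp add: y_def)
  have ax: "a * (w * x)^2 = x" using h by (simp add: is_wgcEP_inv_def)
  have core1: "z * (w * x)^2 = x"
  proof -
    have "z * (w * x)^2 = B * X * (a * (w * x)^2)" by (simp add: zB mult.assoc)
    then show ?thesis using ax e1 by simp
  qed
  have wzwx: "w * z * w * x = w * a * w * x"
  proof -
    have "w * z * w * x = w * B * (X * B * x)" by (simp add: zB B_def X_def mult.assoc)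
    then show ?thesis using XBx by (simp add: B_def mult.assoc)
  qed
  have core2: "invol (w * z * w * x) = w * z * w * x"
    using h wzwx by (simp add: is_wgcEP_inv_def)
  have core3: "x * w * (z * w)^2 = z * w"
  proof -
    have "x * w * (z * w)^2 = (X * B * X) * B * B * X * B" by (simp add: zw X_def power2_eq_square mult.assoc)
    also have "\<dots> = (X * B * B * X) * B" using XBX by (simp add: mult.assoc)
    also have "\<dots> = B * X * B" by (simp only: K[symmetric])
    also have "\<dots> = z * w" using zw by simp
    finally show ?thesis .
  qed
  show "is_wcore_inv z w x" unfolding is_wcore_inv_def using core1 core2 core3 by blast
  have yw: "y * w = B - B * X * B" by (simp add: y_def zw B_def algebra_simps)
  show "y * w * z = 0"
  proof -
    have "y * w * z = B * B * X * a - B * (X * B * B * X) * a"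
      by (simp add: yw zB algebra_simps)
    also have "\<dots> = B * B * X * a - B * (B * X) * a" by (simp only: K[symmetric])
    also have "\<dots> = 0" by (simp add: mult.assoc)
    finally show ?thesis .
  qed
  define p where "p = w * a * w * x"
  have ps: "invol p = p" using h by (simp add: is_wgcEP_inv_def p_def)
  have pp: "p * p = p"
  proof -
    have "p * p = w * B * (X * B * x)" by (simp add: p_def B_def X_def mult.assoc)
    then show ?thesis using XBx by (simp add: p_def B_def mult.assoc)
  qed
  have wz: "w * z = p * (w * a)" by (simp add: zB p_def B_def X_def mult.assoc)
  have wy: "w * y = w * a - p * (w * a)" by (simp add: y_def wz right_diff_distrib)
  show "invol (w * z) * (w * y) = 0"
  proof -
    have "invol (w * z) * (w * y) = invol (w * a) * p * (w * a - p * (w * a))"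
      by (simp add: wz wy invol_mult ps)
    also have "\<dots> = invol (w * a) * (p * (w * a) - (p * p) * (w * a))"
      by (simp add: right_diff_distrib mult.assoc)
    also have "\<dots> = 0" using pp by simp
    finally show ?thesis .
  qed
  define Q where "Q = 1 - B * X"
  have QBQ: "Q * B * Q = Q * B"
  proof -
    have "Q * B * Q = Q * B - (B * B * X - B * (X * B * B * X))"
      by (simp add: Q_def algebra_simps)
    also have "\<dots> = Q * B - (B * B * X - B * (B * X))" by (simp only: K[symmetric])
    finally show ?thesis by (simp add: mult.assoc)
  qed
  have ywQ: "y * w = Q * B" by (simp add: yw Q_def algebra_simps)
  have pwQ: "(Q * B) ^ Suc m = Q * B ^ Suc m" for m
  proof (induction m)
    case 0 then show ?case by simp
  next
    case (Suc m)
    have "(Q * B) ^ Suc (Suc m) = Q * B * (Q * B ^ Suc m)" by (simp only: power_Suc[of "Q*B" "Suc m"] Suc.IH mult.assoc)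
    also have "\<dots> = (Q * B * Q) * B ^ Suc m" by (simp add: mult.assoc)
    also have "\<dots> = Q * B ^ Suc (Suc m)" using QBQ by (simp add: mult.assoc)
    finally show ?case .
  qed
  have QQ: "Q * (1 - X * B) = Q"
  proof -
    have "Q * (1 - X * B) = Q - X * B + (B * X * X) * B" by (simp add: Q_def algebra_simps)
    then show ?thesis using e2 by simp
  qed
  have Qn: "Q * B ^ n = Q * (B ^ n - X * B ^ (n + 1))" for n
  proof -
    have "Q * (B ^ n - X * B ^ (n + 1)) = Q * (1 - X * B) * B ^ n" by (simp add: algebra_simps)
    then show ?thesis using QQ by simp
  qed
  have lim: "(\<lambda>n. norm (B ^ n - X * B ^ (n + 1)) powr (1 / real n)) \<longlonglongrightarrow> 0"
    using h unfolding is_wgcEP_inv_def B_def X_def by simp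
  have "(\<lambda>n. norm ((y * w) ^ n) powr (1 / real n)) \<longlonglongrightarrow> 0"
  proof (rule qn_lemma[OF lim, of _ "norm Q"])
    fix n :: nat assume n: "n \<ge> 1"
    then obtain m where m: "n = Suc m" by (cases n) auto
    have "norm ((y * w) ^ n) = norm (Q * (B ^ n - X * B ^ (n + 1)))"
      using pwQ[of m] Qn[of n] by (simp add: ywQ m)
    also have "\<dots> \<le> norm Q * norm (B ^ n - X * B ^ (n + 1))" by (rule norm_mult_ineq)
    finally show "norm ((y * w) ^ n) \<le> norm Q * norm (B ^ n - X * B ^ (n + 1))" .
  qed auto
  then show "y \<in> w_qnil w" unfolding w_qnil_def by simp
qed

lemma zero_qnil: "(0::'a::cbanach_star_algebra_1) \<in> w_qnil w"
  unfolding w_qnil_def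
proof (simp, rule tendsto_eventually)
  show "eventually (\<lambda>n. norm ((0::'a) ^ n) powr (1 / real n) = 0) sequentially"
    using eventually_ge_at_top[of 1]
    by eventually_elim (auto simp: power_0_left)
qed

lemma core_unique:
  fixes z w x1 x2 :: "'a::cbanach_star_algebra_1"
  assumes "is_wcore_inv z w x1" "is_wcore_inv z w x2"
  shows "x1 = x2"
proof -
  have "is_wgcEP_inv (z + 0) w x1" "is_wgcEP_inv (z + 0) w x2"
    using three_to_one[of 0 w z, OF _ assms(1) zero_qnil] three_to_one[of 0 w z, OF _ assms(2) zero_qnil]
    by auto
  then show ?thesis using gcEP_unique by blast
qed

theorem theorem3p1:
  fixes a w :: "'a::cbanach_star_algebra_1"
  shows "(has_wgcEP_inv a w \<longleftrightarrow>
          (\<exists>z y. a = z + y \<and> invol (w * z) * (w * y) = 0 \<and> y * w * z = 0 \<and>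
                 has_wcore_inv z w \<and> y \<in> w_qnil w))
       \<and> ((\<exists>z y. a = z + y \<and> invol (w * z) * (w * y) = 0 \<and> y * w * z = 0 \<and>
                 has_wcore_inv z w \<and> y \<in> w_qnil w) \<longleftrightarrow>
          (\<exists>z y. a = z + y \<and> y * w * z = 0 \<and> has_wcore_inv z w \<and> y \<in> w_qnil w))
       \<and> (\<forall>z y. a = z + y \<and> y * w * z = 0 \<and> has_wcore_inv z w \<and> y \<in> w_qnil w \<longrightarrow>
              wgcEP_inv a w = wcore_inv z w)"
proof -
  have I: "has_wgcEP_inv a w \<Longrightarrow> (\<exists>z y. a = z + y \<and> invol (w * z) * (w * y) = 0 \<and> y * w * z = 0 \<and>
                 has_wcore_inv z w \<and> y \<in> w_qnil w)"
  proof -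
    assume "has_wgcEP_inv a w"
    then obtain x where h: "is_wgcEP_inv a w x" unfolding has_wgcEP_inv_def by blast
    show ?thesis
      using one_to_two[OF h] unfolding has_wcore_inv_def by blast
  qed
  have III: "(\<exists>z y. a = z + y \<and> y * w * z = 0 \<and> has_wcore_inv z w \<and> y \<in> w_qnil w) \<Longrightarrow> has_wgcEP_inv a w"
  proof -
    assume "\<exists>z y. a = z + y \<and> y * w * z = 0 \<and> has_wcore_inv z w \<and> y \<in> w_qnil w"
    then obtain z y x where "a = z + y" "y * w * z = 0" "is_wcore_inv z w x" "y \<in> w_qnil w"
      unfolding has_wcore_inv_def by blast
    then show ?thesis using three_to_one unfolding has_wgcEP_inv_def by blast
  qed
  have U: "wgcEP_inv a w = wcore_inv z w"
    if as: "a = z + y" "y * w * z = 0" "has_wcore_inv z w" "y \<in> w_qnil w" for z y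
  proof -
    obtain x where x: "is_wcore_inv z w x" using as unfolding has_wcore_inv_def by blast
    have g: "is_wgcEP_inv a w x" using three_to_one[OF as(2) x as(4)] as(1) by simp
    have "wgcEP_inv a w = x" unfolding wgcEP_inv_def
      using g gcEP_unique by (intro the_equality) blast+
    moreover have "wcore_inv z w = x" unfolding wcore_inv_def
      using x core_unique by (intro the_equality) blast+
    ultimately show ?thesis by simp
  qed
  show ?thesis using I III U by blast
qed

end
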